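(* Let $A,B,S\in\mathbb T$ and let $\boldsymbol\mu$ be a ratio set that witnesses $B$ or witnesses $S$. If $A\prec^{\boldsymbol\mu}B$, then $AS\prec^{\boldsymbol\mu}BS$. If $A\preccurlyeq^{\boldsymbol\mu}B$, then $AS\preccurlyeq^{\boldsymbol\mu}BS$.
   Context: $\mathbb T$ is the field of real grid-based transseries over the totally ordered group $\mathfrak G$ of transmonomials; $\operatorname{mag}T$ is the dominant monomial of $T\ne0$. A ratio set is a finite $\boldsymbol\mu\subset\{\mathfrak g\in\mathfrak G:\mathfrak g\prec1\}$; $\boldsymbol\mu^*$ (resp. $\boldsymbol\mu^+$) is the set of products of zero or more (resp. one or more) elements of $\boldsymbol\mu$. Monomials: $\mathfrak m\preccurlyeq^{\boldsymbol\mu}\mathfrak n$ iff $\mathfrak m/\mathfrak n\in\boldsymbol\mu^*$, $\mathfrak m\prec^{\boldsymbol\mu}\mathfrak n$ iff $\mathfrak m/\mathfrak n\in\boldsymbol\mu^+$. Transseries: $A\prec^{\boldsymbol\mu}B$ (resp. $\preccurlyeq^{\boldsymbol\mu}$) iff every $\mathfrak a\in\operatorname{supp}A$ satisfies $\mathfrak a\prec^{\boldsymbol\mu}\mathfrak b$ (resp. $\preccurlyeq^{\boldsymbol\mu}$) for some $\mathfrak b\in\operatorname{supp}B$. $\boldsymbol\mu$ witnesses nonzero $T$ iff $\operatorname{supp}T\subseteq(\operatorname{mag}T)\boldsymbol\mu^*$. *)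

theory Defs
  imports Complex_Main
begin

text \<open>
  The group of monomials is written ADDITIVELY: the product of monomials m n is
  m + n, the monomial 1 is 0, m/n is m - n, and the asymptotic ordering
  m \<prec> n of monomials is m < n (so "m \<prec> 1" is "m < 0").
\<close>

definition supp :: "('g \<Rightarrow> real) \<Rightarrow> 'g set" where
  "supp f = {m. f m \<noteq> 0}"

text \<open>mu^* : products of zero or more elements of mu; mu^+ : of one or more.\<close>
definition mstar :: "'g::comm_monoid_add set \<Rightarrow> 'g set" where
  "mstar mu = {sum_list xs | xs. set xs \<subseteq> mu}"

definition mplus :: "'g::comm_monoid_add set \<Rightarrow> 'g set" where
  "mplus mu = {sum_list xs | xs. xs \<noteq> [] \<and> set xs \<subseteq> mu}"

definition ratio_set :: "'g::linordered_ab_group_add set \<Rightarrow> bool" where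
  "ratio_set mu \<longleftrightarrow> finite mu \<and> mu \<subseteq> {g. g < 0}"

definition grid_based :: "('g::linordered_ab_group_add \<Rightarrow> real) \<Rightarrow> bool" where
  "grid_based f \<longleftrightarrow> (\<exists>M mu. finite M \<and> ratio_set mu \<and>
       supp f \<subseteq> {m + u | m u. m \<in> M \<and> u \<in> mstar mu})"

text \<open>Product of series (Cauchy product; the sum is finite for grid-based series).\<close>
definition ts_times :: "('g::linordered_ab_group_add \<Rightarrow> real) \<Rightarrow> ('g \<Rightarrow> real) \<Rightarrow> 'g \<Rightarrow> real" where
  "ts_times f g m = (\<Sum>p\<in>{(a, b). a \<in> supp f \<and> b \<in> supp g \<and> a + b = m}. f (fst p) * g (snd p))"

definition mag :: "('g::linorder \<Rightarrow> real) \<Rightarrow> 'g" where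
  "mag f = (GREATEST m. m \<in> supp f)"

definition mono_preceq :: "'g::ab_group_add set \<Rightarrow> 'g \<Rightarrow> 'g \<Rightarrow> bool" where
  "mono_preceq mu m n \<longleftrightarrow> m - n \<in> mstar mu"

definition mono_prec :: "'g::ab_group_add set \<Rightarrow> 'g \<Rightarrow> 'g \<Rightarrow> bool" where
  "mono_prec mu m n \<longleftrightarrow> m - n \<in> mplus mu"

definition ts_prec :: "'g::ab_group_add set \<Rightarrow> ('g \<Rightarrow> real) \<Rightarrow> ('g \<Rightarrow> real) \<Rightarrow> bool" where
  "ts_prec mu A B \<longleftrightarrow> (\<forall>a\<in>supp A. \<exists>b\<in>supp B. mono_prec mu a b)"

definition ts_preceq :: "'g::ab_group_add set \<Rightarrow> ('g \<Rightarrow> real) \<Rightarrow> ('g \<Rightarrow> real) \<Rightarrow> bool" where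
  "ts_preceq mu A B \<longleftrightarrow> (\<forall>a\<in>supp A. \<exists>b\<in>supp B. mono_preceq mu a b)"

definition witnesses :: "'g::linordered_ab_group_add set \<Rightarrow> ('g \<Rightarrow> real) \<Rightarrow> bool" where
  "witnesses mu T \<longleftrightarrow> T \<noteq> (\<lambda>_. 0) \<and> supp T \<subseteq> {mag T + u | u. u \<in> mstar mu}"

end

theory Submission
  imports Defs "HOL-Library.Infinite_Set"
begin

lemma mstar_add: "u \<in> mstar mu \<Longrightarrow> v \<in> mstar mu \<Longrightarrow> u + v \<in> mstar mu"
  unfolding mstar_def
proof clarify
  fix xs ys assume "set xs \<subseteq> mu" "set ys \<subseteq> mu"
  then show "\<exists>zs. sum_list xs + sum_list ys = sum_list zs \<and> set zs \<subseteq> mu"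
    by (intro exI[of _ "xs @ ys"]) auto
qed

lemma mplus_add: "u \<in> mplus mu \<Longrightarrow> v \<in> mstar mu \<Longrightarrow> u + v \<in> mplus mu"
  unfolding mstar_def mplus_def
proof clarify
  fix xs ys assume "set xs \<subseteq> mu" "set ys \<subseteq> mu" "xs \<noteq> []"
  then show "\<exists>zs. sum_list xs + sum_list ys = sum_list zs \<and> zs \<noteq> [] \<and> set zs \<subseteq> mu"
    by (intro exI[of _ "xs @ ys"]) auto
qed

lemma mplus_mstar: "u \<in> mplus mu \<Longrightarrow> u \<in> mstar mu"
  unfolding mstar_def mplus_def by auto

lemma mstar_zero: "0 \<in> mstar mu"
  unfolding mstar_def by (auto intro!: exI[of _ "[]"])

lemma mstar_nonpos: "ratio_set mu \<Longrightarrow> u \<in> mstar mu \<Longrightarrow> (u::'g::linordered_ab_group_add) \<le> 0"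
  unfolding mstar_def ratio_set_def by (auto intro!: sum_list_nonpos)

lemma mstar_empty: "mstar {} = {0::'g::comm_monoid_add}"
  unfolding mstar_def by auto

lemma sum_list_split: "sum_list (xs::'g::comm_monoid_add list) =
   sum_list (replicate (count_list xs x) x) + sum_list (filter (\<lambda>y. y \<noteq> x) xs)"
  by (induction xs) (auto simp: add_ac)

lemma mstar_insert:
  assumes "u \<in> mstar (insert x mu)"
  shows "\<exists>n v. v \<in> mstar mu \<and> u = sum_list (replicate n x) + v"
proof -
  obtain xs where xs: "u = sum_list xs" "set xs \<subseteq> insert x mu" using assms unfolding mstar_def by auto
  have "sum_list (filter (\<lambda>y. y \<noteq> x) xs) \<in> mstar mu"
    unfolding mstar_def using xs(2) by (auto intro!: exI[of _ "filter (\<lambda>y. y \<noteq> x) xs"])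
  then show ?thesis using xs(1) sum_list_split[of xs x] by blast
qed

lemma rep_anti:
  assumes "(x::'g::linordered_ab_group_add) \<le> 0" "m \<le> n"
  shows "sum_list (replicate n x) \<le> sum_list (replicate m x)"
proof -
  have "replicate n x = replicate m x @ replicate (n - m) x"
    using assms(2) by (metis le_add_diff_inverse replicate_add)
  moreover have "sum_list (replicate (n - m) x) \<le> 0"
    using assms(1) by (intro sum_list_nonpos) auto
  ultimately show ?thesis by simp
qed

lemma nat_mono_sub:
  fixes n :: "nat \<Rightarrow> nat"
  shows "\<exists>r::nat\<Rightarrow>nat. strict_mono r \<and> (\<forall>i j. i \<le> j \<longrightarrow> n (r i) \<le> n (r j))"
proof -
  obtain r where r: "strict_mono r" "monoseq (\<lambda>k. n (r k))" using seq_monosub by blast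
  show ?thesis
  proof (cases "\<forall>i j. i \<le> j \<longrightarrow> n (r i) \<le> n (r j)")
    case True then show ?thesis using r by blast
  next
    case False
    then have anti: "\<forall>i j. i \<le> j \<longrightarrow> n (r j) \<le> n (r i)" using r(2) unfolding monoseq_def by blast
    obtain N where N: "\<forall>k. n (r N) \<le> n (r k)"
      using ex_has_least_nat[of "\<lambda>_. True" 0 "\<lambda>k. n (r k)"] by auto
    have c: "\<forall>k. n (r (k + N)) = n (r N)"
    proof
      fix k
      have "n (r (k + N)) \<le> n (r N)" using anti by simp
      then show "n (r (k + N)) = n (r N)" using N le_antisym by blast
    qed
    have "strict_mono (\<lambda>k. r (k + N))" using r(1) unfolding strict_mono_def by auto
    then show ?thesis using c by (intro exI[of _ "\<lambda>k. r (k + N)"]) auto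
  qed
qed

lemma wqo_seq_aux:
  fixes mu :: "'g::linordered_ab_group_add set"
  assumes "finite mu"
  shows "\<forall>f. mu \<subseteq> {g. g < 0} \<longrightarrow> (\<forall>k. f k \<in> mstar mu) \<longrightarrow>
     (\<exists>r::nat\<Rightarrow>nat. strict_mono r \<and> (\<forall>i j. i \<le> j \<longrightarrow> f (r j) \<le> f (r i)))"
  using assms
proof (induction mu rule: finite_induct)
  case empty
  show ?case
  proof (intro allI impI)
    fix f :: "nat \<Rightarrow> 'g" assume "\<forall>k. f k \<in> mstar {}"
    then have f0: "\<And>k. f k = 0" by (auto simp: mstar_empty)
    have "strict_mono (\<lambda>k::nat. k)" by (simp add: strict_mono_def)
    moreover have "\<forall>i j. i \<le> j \<longrightarrow> f j \<le> f i" using f0 by simp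
    ultimately show "\<exists>r::nat\<Rightarrow>nat. strict_mono r \<and> (\<forall>i j. i \<le> j \<longrightarrow> f (r j) \<le> f (r i))"
      by (intro exI[of _ "\<lambda>k::nat. k"] conjI)
  qed
next
  case (insert x mu)
  show ?case
  proof (intro allI impI)
    fix f :: "nat \<Rightarrow> 'g"
    assume sub: "insert x mu \<subseteq> {g. g < 0}" and fm: "\<forall>k. f k \<in> mstar (insert x mu)"
    have "\<forall>k. \<exists>n v. v \<in> mstar mu \<and> f k = sum_list (replicate n x) + v"
    proof
      fix k show "\<exists>n v. v \<in> mstar mu \<and> f k = sum_list (replicate n x) + v"
        using mstar_insert[of "f k" x mu] fm by simp
    qed
    then have "\<exists>n. \<forall>k. \<exists>v. v \<in> mstar mu \<and> f k = sum_list (replicate (n k) x) + v"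
      by (rule choice)
    then obtain n where "\<forall>k. \<exists>v. v \<in> mstar mu \<and> f k = sum_list (replicate (n k) x) + v"
      by (rule exE)
    then have "\<exists>v. \<forall>k. v k \<in> mstar mu \<and> f k = sum_list (replicate (n k) x) + v k"
      by (rule choice)
    then obtain v where "\<forall>k. v k \<in> mstar mu \<and> f k = sum_list (replicate (n k) x) + v k"
      by (rule exE)
    then have nv: "\<And>k. v k \<in> mstar mu" "\<And>k. f k = sum_list (replicate (n k) x) + v k"
      by auto
    obtain r :: "nat \<Rightarrow> nat" where r: "strict_mono r" "\<forall>i j. i \<le> j \<longrightarrow> n (r i) \<le> n (r j)"
      using nat_mono_sub[of n] by (elim exE conjE)
    have sub': "mu \<subseteq> {g. g < 0}" using sub by simp
    have vr: "\<forall>k. v (r k) \<in> mstar mu" using nv(1) by simp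
    have "\<exists>r2::nat\<Rightarrow>nat. strict_mono r2 \<and> (\<forall>i j. i \<le> j \<longrightarrow> v (r (r2 j)) \<le> v (r (r2 i)))"
      using mp[OF mp[OF spec[OF insert.IH, of "\<lambda>k. v (r k)"] sub'] vr] by simp
    then obtain r2 :: "nat \<Rightarrow> nat" where r2: "strict_mono r2" "\<forall>i j. i \<le> j \<longrightarrow> v (r (r2 j)) \<le> v (r (r2 i))"
      by (elim exE conjE)
    have x0: "x \<le> 0" using sub by auto
    have "strict_mono (r \<circ> r2)" using r(1) r2(1) unfolding strict_mono_def by simp
    moreover have "\<forall>i j. i \<le> j \<longrightarrow> f ((r \<circ> r2) j) \<le> f ((r \<circ> r2) i)"
    proof (intro allI impI)
      fix i j :: nat assume ij: "i \<le> j"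
      then have "r2 i \<le> r2 j" using r2(1) by (simp add: strict_mono_less_eq)
      then have "n (r (r2 i)) \<le> n (r (r2 j))" using r(2) by blast
      then have A: "sum_list (replicate (n (r (r2 j))) x) \<le> sum_list (replicate (n (r (r2 i))) x)"
        using rep_anti x0 by blast
      have B: "v (r (r2 j)) \<le> v (r (r2 i))" using r2(2) ij by blast
      show "f ((r \<circ> r2) j) \<le> f ((r \<circ> r2) i)" unfolding comp_def nv(2) using add_mono[OF A B] .
    qed
    ultimately show "\<exists>r::nat\<Rightarrow>nat. strict_mono r \<and> (\<forall>i j. i \<le> j \<longrightarrow> f (r j) \<le> f (r i))"
      by blast
  qed
qed

lemma wqo_seq:
  fixes mu :: "'g::linordered_ab_group_add set"
  assumes "finite mu" "mu \<subseteq> {g. g < 0}"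
  shows "(\<forall>k. f k \<in> mstar mu) \<Longrightarrow> \<exists>r::nat\<Rightarrow>nat. strict_mono r \<and> (\<forall>i j. i \<le> j \<longrightarrow> f (r j) \<le> f (r i))"
  using wqo_seq_aux[OF assms(1)] assms(2) by blast

lemma grid_max:
  fixes F :: "'g::linordered_ab_group_add \<Rightarrow> real"
  assumes gF: "grid_based F" and XF: "X \<subseteq> supp F" and Xne: "X \<noteq> {}"
  shows "\<exists>m\<in>X. \<forall>y\<in>X. y \<le> m"
proof (rule ccontr)
  assume nm: "\<not> ?thesis"
  then have step: "\<And>m. m \<in> X \<Longrightarrow> \<exists>y. y \<in> X \<and> m < y" by (auto simp: not_le)
  obtain x0 where x0: "x0 \<in> X" using Xne by auto
  define f where "f = rec_nat x0 (\<lambda>_ m. SOME y. y \<in> X \<and> m < y)"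
  have fX: "f k \<in> X" for k
  proof (induction k)
    case 0
    show ?case using x0 by (simp add: f_def)
  next
    case (Suc k)
    have "f (Suc k) = (SOME y. y \<in> X \<and> f k < y)" by (simp add: f_def)
    then show ?case using someI_ex[OF step[OF Suc]] by simp
  qed
  have fS: "f k < f (Suc k)" for k
  proof -
    have "f (Suc k) = (SOME y. y \<in> X \<and> f k < y)" by (simp add: f_def)
    then show ?thesis using someI_ex[OF step[OF fX[of k]]] by simp
  qed
  have finc: "i < j \<Longrightarrow> f i < f j" for i j
    using lift_Suc_mono_less[of f, OF fS] by simp
  obtain M mu' where Mmu: "finite M" "ratio_set mu'"
    "supp F \<subseteq> {m + u | m u. m \<in> M \<and> u \<in> mstar mu'}"
    using gF unfolding grid_based_def by blast
  have "\<forall>k. \<exists>m u. m \<in> M \<and> u \<in> mstar mu' \<and> f k = m + u"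
  proof
    fix k
    have "f k \<in> {m + u | m u. m \<in> M \<and> u \<in> mstar mu'}" using subsetD[OF subset_trans[OF XF Mmu(3)] fX[of k]] .
    then show "\<exists>m u. m \<in> M \<and> u \<in> mstar mu' \<and> f k = m + u" by auto
  qed
  then have "\<exists>g. \<forall>k. \<exists>u. g k \<in> M \<and> u \<in> mstar mu' \<and> f k = g k + u"
    by (rule choice)
  then obtain g where "\<forall>k. \<exists>u. g k \<in> M \<and> u \<in> mstar mu' \<and> f k = g k + u"
    by (rule exE)
  then have "\<exists>u. \<forall>k. g k \<in> M \<and> u k \<in> mstar mu' \<and> f k = g k + u k"
    by (rule choice)
  then obtain u where "\<forall>k. g k \<in> M \<and> u k \<in> mstar mu' \<and> f k = g k + u k"
    by (rule exE)
  then have gu: "\<And>k. g k \<in> M" "\<And>k. u k \<in> mstar mu'" "\<And>k. f k = g k + u k"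
    by auto
  have "g ` UNIV \<subseteq> M" using gu(1) by auto
  then have "finite (g ` UNIV)" using Mmu(1) by (rule finite_subset)
  then obtain a0 where "infinite {a \<in> UNIV. g a = g a0}"
    using pigeonhole_infinite[of "UNIV::nat set" g] by blast
  then obtain r :: "nat \<Rightarrow> nat" where r: "strict_mono r" "\<And>n. r n \<in> {a \<in> UNIV. g a = g a0}"
    using infinite_enumerate[of "{a \<in> UNIV. g a = g a0}"] by blast
  have mu'f: "finite mu'" "mu' \<subseteq> {g. g < 0}" using Mmu(2) unfolding ratio_set_def by auto
  have "\<forall>k. u (r k) \<in> mstar mu'" using gu(2) by simp
  from wqo_seq[OF mu'f this] obtain r2 :: "nat \<Rightarrow> nat" where
    r2: "strict_mono r2" "\<forall>i j. i \<le> j \<longrightarrow> u (r (r2 j)) \<le> u (r (r2 i))"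
    by (elim exE conjE)
  have "u (r (r2 1)) \<le> u (r (r2 0))" using r2(2) by simp
  moreover have "g (r (r2 1)) = g (r (r2 0))" using r(2) by simp
  ultimately have "f (r (r2 1)) \<le> f (r (r2 0))" using gu(3) by simp
  moreover have "r (r2 0) < r (r2 1)" using r(1) r2(1) by (simp add: strict_mono_def)
  ultimately show False using finc[of "r (r2 0)" "r (r2 1)"] by simp
qed

lemma supp_times:
  assumes "c \<in> supp (ts_times A S)"
  shows "\<exists>a s. a \<in> supp A \<and> s \<in> supp S \<and> c = a + s"
proof (rule ccontr)
  assume "\<not> ?thesis"
  then have "{(a, b). a \<in> supp A \<and> b \<in> supp S \<and> a + b = c} = {}" by auto
  then have "ts_times A S c = 0" unfolding ts_times_def by (simp only: sum.empty)
  then show False using assms unfolding supp_def by simp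
qed

lemma mag_eq:
  assumes "g \<in> supp F" "\<forall>y\<in>supp F. y \<le> g"
  shows "mag F = g"
  unfolding mag_def using assms by (intro Greatest_equality) auto


lemma main_rel:
  fixes A B S :: "'g::linordered_ab_group_add \<Rightarrow> real" and mu :: "'g set"
  assumes gB: "grid_based B" and gS: "grid_based S"
    and rs: "ratio_set mu"
    and wit: "witnesses mu B \<or> witnesses mu S"
    and Rcl: "\<And>u v. u \<in> R \<Longrightarrow> v \<in> mstar mu \<Longrightarrow> u + v \<in> R"
    and AB: "\<forall>a\<in>supp A. \<exists>b\<in>supp B. a - b \<in> R"
  shows "\<forall>c\<in>supp (ts_times A S). \<exists>d\<in>supp (ts_times B S). c - d \<in> R"
proof
  fix c assume "c \<in> supp (ts_times A S)"
  then obtain a s where as: "a \<in> supp A" "s \<in> supp S" "c = a + s" using supp_times by blast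
  obtain b where b: "b \<in> supp B" "a - b \<in> R" using AB as(1) by blast
  have np: "\<And>u. u \<in> mstar mu \<Longrightarrow> u \<le> 0" using mstar_nonpos rs by blast
  show "\<exists>d\<in>supp (ts_times B S). c - d \<in> R"
  proof (cases "witnesses mu B")
    case True
    then have "supp B \<noteq> {}" unfolding witnesses_def supp_def by auto
    then obtain g where g: "g \<in> supp B" "\<forall>y\<in>supp B. y \<le> g" using grid_max[OF gB subset_refl] by blast
    have "mag B = g" using mag_eq g by blast
    then have gB': "\<forall>y\<in>supp B. y - g \<in> mstar mu" using True unfolding witnesses_def by auto
    define T where "T = {t \<in> supp S. s - t \<in> mstar mu}"
    have "s \<in> T" using as(2) mstar_zero by (simp add: T_def)
    then obtain s0 where s0: "s0 \<in> T" "\<forall>y\<in>T. y \<le> s0" using grid_max[OF gS, of T] unfolding T_def by blast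
    have s0': "s0 \<in> supp S" "s - s0 \<in> mstar mu" using s0(1) T_def by auto
    have P: "{(x, y). x \<in> supp B \<and> y \<in> supp S \<and> x + y = g + s0} = {(g, s0)}"
    proof (intro equalityI subsetI)
      fix p assume "p \<in> {(x, y). x \<in> supp B \<and> y \<in> supp S \<and> x + y = g + s0}"
      then obtain x y where p: "p = (x, y)" "x \<in> supp B" "y \<in> supp S" "x + y = g + s0" by auto
      have xg: "x - g \<in> mstar mu" using gB' p(2) by blast
      have e: "s0 - y = x - g" using p(4) by (simp add: algebra_simps)
      have "s - y = (s - s0) + (s0 - y)" by (simp add: algebra_simps)
      also have "\<dots> = (s - s0) + (x - g)" using e by simp
      finally have "s - y = (s - s0) + (x - g)" .
      then have "s - y \<in> mstar mu" using mstar_add[OF s0'(2) xg] by (simp only:)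
      then have "y \<in> T" using p(3) T_def by simp
      then have "y \<le> s0" using s0(2) by blast
      moreover have "s0 - y \<le> 0" using np[OF xg] e by (simp only:)
      then have "s0 \<le> y" by simp
      ultimately have "y = s0" by simp
      then have "x = g" using p(4) by simp
      then show "p \<in> {(g, s0)}" using p(1) \<open>y = s0\<close> by simp
    qed (use g s0' in auto)
    have "ts_times B S (g + s0) = B g * S s0" unfolding ts_times_def P by simp
    then have dsupp: "g + s0 \<in> supp (ts_times B S)" using g(1) s0'(1) unfolding supp_def by simp
    have eq: "c - (g + s0) = (a - b) + ((b - g) + (s - s0))" using as(3) by (simp add: algebra_simps)
    have inR: "(a - b) + ((b - g) + (s - s0)) \<in> R"
      using Rcl[OF b(2) mstar_add[OF bspec[OF gB' b(1)] s0'(2)]] .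
    have "c - (g + s0) \<in> R" using eq inR by (simp only:)
    with dsupp show ?thesis by blast
  next
    case False
    then have W: "witnesses mu S" using wit by blast
    then have "supp S \<noteq> {}" unfolding witnesses_def supp_def by auto
    then obtain h where h: "h \<in> supp S" "\<forall>y\<in>supp S. y \<le> h" using grid_max[OF gS subset_refl] by blast
    have "mag S = h" using mag_eq h by blast
    then have hS: "\<forall>y\<in>supp S. y - h \<in> mstar mu" using W unfolding witnesses_def by auto
    define T where "T = {t \<in> supp B. b - t \<in> mstar mu}"
    have "b \<in> T" using b(1) mstar_zero by (simp add: T_def)
    then obtain b0 where b0: "b0 \<in> T" "\<forall>y\<in>T. y \<le> b0" using grid_max[OF gB, of T] unfolding T_def by blast
    have b0': "b0 \<in> supp B" "b - b0 \<in> mstar mu" using b0(1) T_def by auto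
    have P: "{(x, y). x \<in> supp B \<and> y \<in> supp S \<and> x + y = b0 + h} = {(b0, h)}"
    proof (intro equalityI subsetI)
      fix p assume "p \<in> {(x, y). x \<in> supp B \<and> y \<in> supp S \<and> x + y = b0 + h}"
      then obtain x y where p: "p = (x, y)" "x \<in> supp B" "y \<in> supp S" "x + y = b0 + h" by auto
      have yh: "y - h \<in> mstar mu" using hS p(3) by blast
      have e: "b0 - x = y - h" using p(4) by (simp add: algebra_simps)
      have "b - x = (b - b0) + (b0 - x)" by (simp add: algebra_simps)
      also have "\<dots> = (b - b0) + (y - h)" using e by simp
      finally have "b - x = (b - b0) + (y - h)" .
      then have "b - x \<in> mstar mu" using mstar_add[OF b0'(2) yh] by (simp only:)
      then have "x \<in> T" using p(2) T_def by simp
      then have "x \<le> b0" using b0(2) by blast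
      moreover have "b0 - x \<le> 0" using np[OF yh] e by (simp only:)
      then have "b0 \<le> x" by simp
      ultimately have "x = b0" by simp
      then have "y = h" using p(4) by simp
      then show "p \<in> {(b0, h)}" using p(1) \<open>x = b0\<close> by simp
    qed (use h b0' in auto)
    have "ts_times B S (b0 + h) = B b0 * S h" unfolding ts_times_def P by simp
    then have dsupp: "b0 + h \<in> supp (ts_times B S)" using h(1) b0'(1) unfolding supp_def by simp
    have eq: "c - (b0 + h) = (a - b) + ((b - b0) + (s - h))" using as(3) by (simp add: algebra_simps)
    have inR: "(a - b) + ((b - b0) + (s - h)) \<in> R"
      using Rcl[OF b(2) mstar_add[OF b0'(2) bspec[OF hS as(2)]]] .
    have "c - (b0 + h) \<in> R" using eq inR by (simp only:)
    with dsupp show ?thesis by blast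
  qed
qed

theorem proposition3p6:
  fixes A B S :: "'g::linordered_ab_group_add \<Rightarrow> real" and mu :: "'g set"
  assumes "grid_based A" and "grid_based B" and "grid_based S"
    and "ratio_set mu"
    and "witnesses mu B \<or> witnesses mu S"
  shows "(ts_prec mu A B \<longrightarrow> ts_prec mu (ts_times A S) (ts_times B S))
       \<and> (ts_preceq mu A B \<longrightarrow> ts_preceq mu (ts_times A S) (ts_times B S))"
proof (intro conjI impI)
  assume "ts_prec mu A B"
  then show "ts_prec mu (ts_times A S) (ts_times B S)"
    using main_rel[OF assms(2-5), of "mplus mu" A] mplus_add
    unfolding ts_prec_def mono_prec_def by blast
next
  assume "ts_preceq mu A B"
  then show "ts_preceq mu (ts_times A S) (ts_times B S)"
    using main_rel[OF assms(2-5), of "mstar mu" A] mstar_add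
    unfolding ts_preceq_def mono_preceq_def by blast
qed

end
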